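(* Let $0<\alpha<1$ and let $u_1,u_2\in C^1[0,+\infty)$. Fix $t_0>0$ with $u_1(t_0)=u_2(t_0)$ and $u_1'(t_0)\neq u_2'(t_0)$, and define $$u(t)=\begin{cases} u_1(t), & 0\le t\le t_0,\\ u_2(t), & t>t_0,\end{cases}$$ so that $u$ is continuous on $[0,+\infty)$ and non-differentiable at $t_0$. Suppose that $u_1^{(\alpha)}(t)$ is continuous (as a function of $t$ on $(0,+\infty)$), and that $u_1^{(\alpha)}(t_0)$ exists and is finite. Then $u^{(\alpha)}(t_0)$ exists and $$u^{(\alpha)}(t_0)=u_1^{(\alpha)}(t_0).$$
   Context: For a function $f$ on $[0,+\infty)$ and $0<\alpha<1$, Jumarie's modified Riemann–Liouville fractional derivative is $$f^{(\alpha)}(t)=\frac{1}{\Gamma(1-\alpha)}\frac{\mathrm{d}}{\mathrm{d}t}\int_0^t (t-x)^{-\alpha}\bigl(f(x)-f(0)\bigr)\,\mathrm{d}x,$$ whenever the derivative exists. $C^1[0,+\infty)$ denotes the continuously differentiable functions on $[0,+\infty)$. *)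

theory Defs
  imports "HOL-Analysis.Analysis"
begin

definition jumarie_integral :: "real \<Rightarrow> (real \<Rightarrow> real) \<Rightarrow> real \<Rightarrow> real" where
  "jumarie_integral \<alpha> f t =
     (1 / Gamma (1 - \<alpha>)) * integral {0..t} (\<lambda>x. (t - x) powr (- \<alpha>) * (f x - f 0))"

definition has_jumarie_derivative :: "real \<Rightarrow> (real \<Rightarrow> real) \<Rightarrow> real \<Rightarrow> real \<Rightarrow> bool" where
  "has_jumarie_derivative \<alpha> f D t \<longleftrightarrow>
     (\<forall>s\<ge>0. (\<lambda>x. (s - x) powr (- \<alpha>) * (f x - f 0)) integrable_on {0..s}) \<and>
     ((jumarie_integral \<alpha> f) has_real_derivative D) (at t within {0..})"

end

theory Submission
  imports Defs
begin

lemma kernel_has_integral: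
  fixes a t \<alpha> :: real
  assumes "\<alpha> < 1" "a \<le> t"
  shows "((\<lambda>x. (t - x) powr (-\<alpha>)) has_integral ((t - a) powr (1 - \<alpha>) / (1 - \<alpha>))) {a..t}"
proof -
  have "((\<lambda>y. y powr (-\<alpha>)) has_integral ((t - a) powr (-\<alpha> + 1) / (-\<alpha> + 1))) {0..t-a}"
    using has_integral_powr_from_0[of "-\<alpha>" "t-a"] assms by simp
  then have "((\<lambda>y. (-y) powr (-\<alpha>)) has_integral ((t - a) powr (-\<alpha> + 1) / (-\<alpha> + 1))) {-(t-a)..-0}"
    by (rule has_integral_reflect_lemma_real)
  then have "((\<lambda>y. (-y) powr (-\<alpha>)) has_integral ((t - a) powr (-\<alpha> + 1) / (-\<alpha> + 1))) (cbox (a-t) 0)"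
    by simp
  from has_integral_affinity'[OF this, of 1 "-t"]
  show ?thesis by (simp add: algebra_simps)
qed

lemma kernel_integrable:
  fixes a t \<alpha> :: real
  assumes "\<alpha> < 1"
  shows "(\<lambda>x. (t - x) powr (-\<alpha>)) integrable_on {a..t}"
  using kernel_has_integral[OF assms, of a t]
  by (cases "a \<le> t") (auto simp: integrable_on_def)

lemma kernel_product_integrable:
  fixes a t \<alpha> :: real and h :: "real \<Rightarrow> real"
  assumes "\<alpha> < 1" "continuous_on {a..t} h"
  shows "(\<lambda>x. (t - x) powr (-\<alpha>) * h x) integrable_on {a..t}"
proof -
  have "(\<lambda>x. h x * (t - x) powr (-\<alpha>)) absolutely_integrable_on {a..t}"
  proof (rule absolutely_integrable_bounded_measurable_product_real)
    show "h \<in> borel_measurable (lebesgue_on {a..t})"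
      using assms(2) by (intro continuous_imp_measurable_on_sets_lebesgue) auto
    show "bounded (h ` {a..t})"
      using assms(2) by (intro compact_imp_bounded compact_continuous_image) auto
    show "(\<lambda>x. (t - x) powr (-\<alpha>)) absolutely_integrable_on {a..t}"
      by (rule nonnegative_absolutely_integrable_1[OF kernel_integrable[OF assms(1)]]) auto
  qed auto
  then show ?thesis
    by (simp add: absolutely_integrable_on_def mult.commute)
qed

theorem mainTheorem1:
  fixes \<alpha> t0 :: real and u1 u2 u1' u2' D1 :: "real \<Rightarrow> real"
  assumes "0 < \<alpha>" "\<alpha> < 1"
    and "\<And>t. t \<ge> 0 \<Longrightarrow> (u1 has_real_derivative u1' t) (at t within {0..})"
    and "continuous_on {0..} u1'"
    and "\<And>t. t \<ge> 0 \<Longrightarrow> (u2 has_real_derivative u2' t) (at t within {0..})"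
    and "continuous_on {0..} u2'"
    and "t0 > 0" "u1 t0 = u2 t0" "u1' t0 \<noteq> u2' t0"
    and "\<And>t. t > 0 \<Longrightarrow> has_jumarie_derivative \<alpha> u1 (D1 t) t"
    and "continuous_on {0<..} D1"
  shows "has_jumarie_derivative \<alpha> (\<lambda>t. if t \<le> t0 then u1 t else u2 t) (D1 t0) t0"
proof -
  note a1 = assms(2) and d1 = assms(3) and c1' = assms(4) and d2 = assms(5) and c2' = assms(6)
    and t0 = assms(7) and eq0 = assms(8)
  define u where "u = (\<lambda>t. if t \<le> t0 then u1 t else u2 t)"
  define g where "g = (\<lambda>x. u2 x - u1 x)"
  define h where "h = (\<lambda>x. if x \<le> t0 then 0 else g x)"
  define k where "k = (\<lambda>t x. (t - x) powr (-\<alpha>) :: real)"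
  define R where "R = (\<lambda>t. integral {0..t} (\<lambda>x. k t x * h x))"
  define c where "c = 1 / Gamma (1 - \<alpha>)"
  have cu1: "continuous_on {0..} u1"
    using d1 by (auto simp: continuous_on_eq_continuous_within intro!: DERIV_continuous)
  have cu2: "continuous_on {0..} u2"
    using d2 by (auto simp: continuous_on_eq_continuous_within intro!: DERIV_continuous)
  have cg: "continuous_on {0..} g" unfolding g_def using cu1 cu2 by (intro continuous_intros)
  have ch: "continuous_on {0..} h"
  proof -
    have "continuous_on {0..} (\<lambda>x. if id x \<le> t0 then 0 else g x)"
      proof (rule continuous_on_cases_le)
        show "continuous_on {x \<in> {0..}. t0 \<le> id x} g" by (rule continuous_on_subset[OF cg]) auto
      qed (auto simp: g_def eq0)
    then show ?thesis by (simp add: h_def)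
  qed
  have uh: "u = (\<lambda>x. u1 x + h x)"
    by (auto simp: u_def h_def g_def)
  have h0: "h 0 = 0" using t0 by (simp add: h_def)
  have u0: "u 0 = u1 0" using t0 by (simp add: u_def)
  have int1: "(\<lambda>x. k s x * (u1 x - u1 0)) integrable_on {0..s}" for s
    unfolding k_def
    by (rule kernel_product_integrable[OF a1]) (auto intro!: continuous_intros intro: continuous_on_subset[OF cu1])
  have inth: "(\<lambda>x. k s x * h x) integrable_on {a..s}" if "a \<ge> 0" for s a
    unfolding k_def
    by (rule kernel_product_integrable[OF a1]) (use that in \<open>auto intro: continuous_on_subset[OF ch]\<close>)
  have intu: "(\<lambda>x. (s - x) powr (-\<alpha>) * (u x - u 0)) integrable_on {0..s}" for s
  proof -
    have "(\<lambda>x. k s x * (u1 x - u1 0) + k s x * h x) integrable_on {0..s}"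
      using int1 inth[of 0] by (intro integrable_add) auto
    then show ?thesis by (simp add: uh h0 k_def algebra_simps)
  qed
  have Jeq: "jumarie_integral \<alpha> u = (\<lambda>t. jumarie_integral \<alpha> u1 t + c * R t)"
  proof
    fix t
    have "integral {0..t} (\<lambda>x. (t - x) powr (-\<alpha>) * (u x - u 0))
        = integral {0..t} (\<lambda>x. k t x * (u1 x - u1 0) + k t x * h x)"
      by (simp add: uh h0 k_def algebra_simps)
    also have "\<dots> = integral {0..t} (\<lambda>x. k t x * (u1 x - u1 0)) + R t"
      unfolding R_def using int1 inth[of 0] by (intro integral_add) auto
    finally show "jumarie_integral \<alpha> u t = jumarie_integral \<alpha> u1 t + c * R t"
      by (simp add: jumarie_integral_def c_def k_def distrib_left)
  qed
  have R0: "R y = 0" if "y \<le> t0" for y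
  proof -
    have "R y = integral {0..y} (\<lambda>x. 0::real)"
      unfolding R_def using that by (intro integral_cong) (auto simp: h_def)
    then show ?thesis by simp
  qed
  obtain M where M: "\<And>x. x \<in> {t0..t0+1} \<Longrightarrow> \<bar>u2' x - u1' x\<bar> \<le> M"
  proof -
    have "bounded ((\<lambda>x. u2' x - u1' x) ` {t0..t0+1})"
      using t0 by (intro compact_imp_bounded compact_continuous_image continuous_intros
          continuous_on_subset[OF c1'] continuous_on_subset[OF c2']) auto
    then obtain B where B: "\<forall>x\<in>{t0..t0+1}. \<bar>u2' x - u1' x\<bar> \<le> B" by (auto simp: bounded_real)
    show ?thesis by (rule that[of B]) (use B in blast)
  qed
  have gb: "\<bar>g x\<bar> \<le> M * (x - t0)" if "x \<in> {t0..t0+1}" for x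
  proof -
    have "norm (g x - g t0) \<le> M * norm (x - t0)"
    proof (rule field_differentiable_bound[of "{t0..t0+1}" g "\<lambda>x. u2' x - u1' x"])
      fix z assume z: "z \<in> {t0..t0+1}"
      show "(g has_field_derivative u2' z - u1' z) (at z within {t0..t0+1})"
        unfolding g_def using z t0
        by (intro derivative_intros has_field_derivative_subset[OF d2] has_field_derivative_subset[OF d1]) auto
      show "norm (u2' z - u1' z) \<le> M" using M z by simp
    qed (use that t0 in auto)
    then show ?thesis using that by (simp add: g_def eq0)
  qed
  have Rb: "\<bar>R y\<bar> \<le> M / (1 - \<alpha>) * (y - t0) * (y - t0) powr (1 - \<alpha>)" if "t0 < y" "y \<le> t0 + 1" for y
  proof -
    have "R y = integral {0..t0} (\<lambda>x. k y x * h x) + integral {t0..y} (\<lambda>x. k y x * h x)"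
      unfolding R_def by (rule Henstock_Kurzweil_Integration.integral_combine[symmetric]) (use that t0 inth[of 0 y] in auto)
    also have "integral {0..t0} (\<lambda>x. k y x * h x) = integral {0..t0} (\<lambda>x. 0::real)"
      by (intro integral_cong) (auto simp: h_def)
    finally have Ry: "R y = integral {t0..y} (\<lambda>x. k y x * h x)" by simp
    have "norm (integral {t0..y} (\<lambda>x. k y x * h x)) \<le> integral {t0..y} (\<lambda>x. M * (y - t0) * k y x)"
    proof (rule integral_norm_bound_integral)
      show "(\<lambda>x. k y x * h x) integrable_on {t0..y}" using inth t0 by auto
      show "(\<lambda>x. M * (y - t0) * k y x) integrable_on {t0..y}"
        unfolding k_def using integrable_on_cmult_left[OF kernel_integrable[OF a1, where a=t0 and t=y], of "M * (y - t0)"] by simp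
      fix x assume x: "x \<in> {t0..y}"
      have "\<bar>h x\<bar> \<le> M * (y - t0)"
      proof (cases "x \<le> t0")
        case True then show ?thesis using M[of t0] t0 that by (auto simp: h_def intro!: mult_nonneg_nonneg order_trans[OF abs_ge_zero])
      next
        case False
        then have "\<bar>h x\<bar> \<le> M * (x - t0)" using gb[of x] x that by (auto simp: h_def)
        also have "\<dots> \<le> M * (y - t0)"
          using M[of t0] t0 x by (intro mult_left_mono) (auto intro: order_trans[OF abs_ge_zero])
        finally show ?thesis .
      qed
      then show "norm (k y x * h x) \<le> M * (y - t0) * k y x"
        by (simp add: abs_mult k_def mult.commute[of "(y - x) powr - \<alpha>"] mult_right_mono)
    qed
    also have "integral {t0..y} (\<lambda>x. M * (y - t0) * k y x) = M * (y - t0) * ((y - t0) powr (1 - \<alpha>) / (1 - \<alpha>))"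
      unfolding k_def using kernel_has_integral[OF a1, where a=t0 and t=y] that
      by (intro integral_unique has_integral_mult_right) auto
    finally show ?thesis using Ry by simp
  qed
  have dR: "(R has_real_derivative 0) (at t0 within {0..})"
  proof -
    have "((\<lambda>y. R y / (y - t0)) \<longlongrightarrow> 0) (at t0 within {0..})"
    proof (rule Lim_null_comparison)
      have "((\<lambda>y. \<bar>y - t0\<bar> powr (1 - \<alpha>)) \<longlongrightarrow> 0) (at t0 within {0..})"
        using a1 by (intro tendsto_zero_powrI tendsto_rabs_zero tendsto_eq_intros) (auto intro: tendsto_ident_at)
      then show "((\<lambda>y. M / (1 - \<alpha>) * \<bar>y - t0\<bar> powr (1 - \<alpha>)) \<longlongrightarrow> 0) (at t0 within {0..})"
        by (rule tendsto_mult_right_zero)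
      show "\<forall>\<^sub>F y in at t0 within {0..}. norm (R y / (y - t0)) \<le> M / (1 - \<alpha>) * \<bar>y - t0\<bar> powr (1 - \<alpha>)"
        unfolding eventually_at
      proof (intro exI[of _ 1] conjI ballI impI)
        show "(0::real) < 1" by simp
        fix y :: real assume "y \<in> {0..}" "y \<noteq> t0 \<and> dist y t0 < 1"
        then have y: "y \<noteq> t0" "\<bar>y - t0\<bar> < 1" by (auto simp: dist_real_def)
        have Mnn: "0 \<le> M" using M[of t0] t0 by (auto intro: order_trans[OF abs_ge_zero])
        show "norm (R y / (y - t0)) \<le> M / (1 - \<alpha>) * \<bar>y - t0\<bar> powr (1 - \<alpha>)"
        proof (cases "y \<le> t0")
          case True then show ?thesis using R0 Mnn a1 by simp
        next
          case False
          then have "\<bar>R y\<bar> \<le> M / (1 - \<alpha>) * (y - t0) * (y - t0) powr (1 - \<alpha>)" using Rb y by auto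
          then have "\<bar>R y\<bar> / (y - t0) \<le> M / (1 - \<alpha>) * (y - t0) powr (1 - \<alpha>)"
            using False by (simp add: divide_le_eq mult_ac)
          then show ?thesis using False by (simp add: abs_div)
        qed
      qed
    qed
    then show ?thesis using R0[of t0] by (simp add: has_field_derivative_iff)
  qed
  have dJ1: "(jumarie_integral \<alpha> u1 has_real_derivative D1 t0) (at t0 within {0..})"
    using assms(10)[OF t0] by (simp add: has_jumarie_derivative_def)
  have "(jumarie_integral \<alpha> u has_real_derivative D1 t0 + c * 0) (at t0 within {0..})"
    unfolding Jeq by (intro DERIV_add DERIV_cmult dJ1 dR)
  then show ?thesis
    using intu unfolding has_jumarie_derivative_def u_def by simp
qed

end
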